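(* Let $0<q<1$. For complex numbers $a,b,c,d$ with $\mathrm{Re}(a+b+c+d-1/2)>0$, and such that every $q^2$-gamma value occurring below is evaluated at a point that is not a non-positive integer, \[ \sum_{n=0}^{\infty}\frac{(1-q^{4n+2a})(1|q^{2})_{a+n-1}(1/2|q^{2})_{n-b}(1/2|q^{2})_{n-c}(1/2|q^{2})_{n-d}}{(1-q^{2})[n]_{q^{2}}!\,(1/2|q^{2})_{a+b+n}(1/2|q^{2})_{a+c+n}(1/2|q^{2})_{a+d+n}}\,q^{2(a+b+c+d)n-n} =\frac{\pi_{q}^{2}\,(1/2|q^{2})_{-b}(1/2|q^{2})_{-c}(1/2|q^{2})_{-d}(1/2|q^{2})_{a+b+c+d-1}}{(1|q^{2})_{a+b+c-1}(1|q^{2})_{a+b+d-1}(1|q^{2})_{a+c+d-1}\,q^{1/2}}. \]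
   Context: Let $0<q<1$ and write $q^{x}=e^{x\log q}$. $(z;q)_\infty=\prod_{k\ge0}(1-zq^k)$. $\Gamma_{q^2}(x)=\frac{(q^2;q^2)_\infty}{(q^{2x};q^2)_\infty}(1-q^2)^{1-x}$; for complex $x,\alpha$, $(x|q^2)_\alpha=\Gamma_{q^2}(x+\alpha)/\Gamma_{q^2}(x)$. $[z]_{q^2}=\frac{1-q^{2z}}{1-q^2}$, $[0]_{q^2}!=1$, $[n]_{q^2}!=\prod_{k=1}^n[k]_{q^2}$. $\pi_q=(1-q^2)q^{1/4}\frac{(q^2;q^2)_\infty^2}{(q;q^2)_\infty^2}$. *)

theory Defs
  imports "HOL-Analysis.Analysis"
begin

definition qpow :: "real \<Rightarrow> complex \<Rightarrow> complex" where
  "qpow q x = exp (x * complex_of_real (ln q))"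

definition qpoch_inf :: "complex \<Rightarrow> complex \<Rightarrow> complex" where
  "qpoch_inf z p = (\<Prod>k. 1 - z * p ^ k)"

definition qgamma2 :: "real \<Rightarrow> complex \<Rightarrow> complex" where
  "qgamma2 q x = qpoch_inf (complex_of_real (q\<^sup>2)) (complex_of_real (q\<^sup>2))
      / qpoch_inf (qpow q (2 * x)) (complex_of_real (q\<^sup>2))
      * exp ((1 - x) * complex_of_real (ln (1 - q\<^sup>2)))"

definition qgamma2_defined :: "real \<Rightarrow> complex \<Rightarrow> bool" where
  "qgamma2_defined q x \<longleftrightarrow> qpoch_inf (qpow q (2 * x)) (complex_of_real (q\<^sup>2)) \<noteq> 0"

definition qpochg2 :: "real \<Rightarrow> complex \<Rightarrow> complex \<Rightarrow> complex" where
  "qpochg2 q x \<alpha> = qgamma2 q (x + \<alpha>) / qgamma2 q x"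

definition qint2 :: "real \<Rightarrow> complex \<Rightarrow> complex" where
  "qint2 q z = (1 - qpow q (2 * z)) / complex_of_real (1 - q\<^sup>2)"

definition qfact2 :: "real \<Rightarrow> nat \<Rightarrow> complex" where
  "qfact2 q n = (\<Prod>k=1..n. qint2 q (of_nat k))"

definition pi_q :: "real \<Rightarrow> complex" where
  "pi_q q = complex_of_real (1 - q\<^sup>2) * qpow q (1/4)
      * (qpoch_inf (complex_of_real (q\<^sup>2)) (complex_of_real (q\<^sup>2)))\<^sup>2
      / (qpoch_inf (complex_of_real q) (complex_of_real (q\<^sup>2)))\<^sup>2"

end

theory Submission
  imports Defs
begin

definition pc :: "complex \<Rightarrow> complex \<Rightarrow> nat \<Rightarrow> complex" where
  "pc P c k = (\<Prod>j<k. 1 - c * P ^ j)"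

definition Pm :: "complex \<Rightarrow> complex \<Rightarrow> nat \<Rightarrow> complex" where
  "Pm P y k = (\<Prod>j<k. y - P ^ j)"

lemma pc_0[simp]: "pc P c 0 = 1" by (simp add: pc_def)
lemma pc_Suc: "pc P c (Suc k) = pc P c k * (1 - c * P ^ k)" by (simp add: pc_def)
lemma Pm_0[simp]: "Pm P y 0 = 1" by (simp add: Pm_def)
lemma Pm_Suc: "Pm P y (Suc k) = Pm P y k * (y - P ^ k)" by (simp add: Pm_def)

lemma pc_Suc': "pc P c (Suc k) = (1 - c) * pc P (c * P) k"
  unfolding pc_def prod.lessThan_Suc_shift by (simp add: mult_ac)

lemma Pm_shift: "Pm P (P * y) (Suc k) = (P * y - 1) * P ^ k * Pm P y k"
proof -
  have "(\<Prod>i<k. P*y - P*P^i) = (\<Prod>i<k. P*(y - P^i))" by (simp add: right_diff_distrib)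
  also have "\<dots> = P^k * Pm P y k" by (simp add: prod.distrib Pm_def)
  finally show ?thesis unfolding Pm_def prod.lessThan_Suc_shift by (simp add: mult_ac)
qed

lemma pc_zero_arg[simp]: "pc P 0 k = 1" by (simp add: pc_def)

lemma pc_nonzero: "(\<And>j. c * P ^ j \<noteq> 1) \<Longrightarrow> pc P c k \<noteq> 0"
  by (auto simp: pc_def)

lemma qpoch_conv:
  fixes c P :: complex
  assumes "norm P < 1"
  shows "convergent_prod (\<lambda>k. 1 - c * P ^ k)"
proof -
  have "summable (\<lambda>k. norm ((1 - c * P ^ k) - 1))"
  proof -
    have "summable (\<lambda>k. norm c * norm P ^ k)"
      using assms by (intro summable_mult summable_geometric) simp
    moreover have "(\<lambda>k. norm ((1 - c * P ^ k) - 1)) = (\<lambda>k. norm c * norm P ^ k)"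
      by (simp add: norm_mult norm_power)
    ultimately show ?thesis by simp
  qed
  then show ?thesis
    by (intro abs_convergent_prod_imp_convergent_prod summable_imp_abs_convergent_prod)
qed

lemma qpoch_lim:
  assumes "norm P < 1"
  shows "(\<lambda>n. pc P c n) \<longlonglongrightarrow> qpoch_inf c P"
proof -
  have "(\<lambda>n. \<Prod>i\<le>n. 1 - c * P ^ i) \<longlonglongrightarrow> qpoch_inf c P"
    unfolding qpoch_inf_def by (rule convergent_prod_LIMSEQ[OF qpoch_conv[OF assms]])
  then have "(\<lambda>n. pc P c (Suc n)) \<longlonglongrightarrow> qpoch_inf c P"
    by (simp add: pc_def lessThan_Suc_atMost)
  then show ?thesis by (rule LIMSEQ_imp_Suc)
qed

lemma qpoch_split:
  assumes "norm P < 1"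
  shows "qpoch_inf c P = pc P c n * qpoch_inf (c * P ^ n) P"
proof -
  have "(\<lambda>k. 1 - c * P ^ k) has_prod ((\<Prod>k<n. 1 - c * P ^ k) * (\<Prod>k. 1 - c * P ^ (k + n)))"
    by (rule has_prod_ignore_initial_segment'[OF qpoch_conv[OF assms]])
  then have "qpoch_inf c P = (\<Prod>k<n. 1 - c * P ^ k) * (\<Prod>k. 1 - c * P ^ (k + n))"
    unfolding qpoch_inf_def by (rule has_prod_unique[symmetric])
  then show ?thesis by (simp add: pc_def qpoch_inf_def power_add mult_ac)
qed

lemma qpoch_nonzero_iff:
  assumes "norm P < 1"
  shows "qpoch_inf c P \<noteq> 0 \<longleftrightarrow> (\<forall>j. c * P ^ j \<noteq> 1)"
proof -
  have hp: "(\<lambda>k. 1 - c * P ^ k) has_prod qpoch_inf c P"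
    unfolding qpoch_inf_def by (rule convergent_prod_has_prod[OF qpoch_conv[OF assms]])
  show ?thesis using has_prod_eq_0_iff[OF hp] by (auto simp: image_iff)
qed

lemma qpoch_zero_arg: "qpoch_inf 0 P = 1"
  by (simp add: qpoch_inf_def)

lemma red_poly:
  fixes A B P w y X :: complex
  shows "(1-A*P^2*X^2)*(y-X)*(1-A*P*P*y*X)*(B-A*P*w*y) - (B-A*P*y)*(1-A*P*w*y)*(1-A*P^2*X^2)*(P*y-1)*X
    = -A*P*(1-A*P*X)*(1-B*P*X)*(w-P*X)*y*(y-X)+y*(1-P*X)*(B-A*P*X)*(1-A*P*w*X)*(1-A*P*P*y*X)"
  by (simp add: algebra_simps power2_eq_square)

lemma red_tel:
  fixes A B P w y X :: complex
  defines "z \<equiv> A*P/B"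
  assumes nz: "B \<noteq> 0" 
    "1 - P*X \<noteq> 0" "1 - z*X \<noteq> 0" "1 - A*P*w*X \<noteq> 0" 
    "1 - A*P*y*P*X \<noteq> 0" "1 - A*P*y \<noteq> 0" "1 - z*w*y \<noteq> 0"
  shows "(1-A*P^2*X^2)/((1-P*X)*(1-z*X)*(1-A*P*w*X)) * (y-X)
     - (1 - z*y)*(1 - A*P*w*y)/((1 - A*P*y)*(1 - z*w*y)) *
       ((1-A*P^2*X^2)/((1-P*X)*(1-z*X)*(1-A*P*w*X)) * ((P*y-1)*X*(1-A*P*y)/(1-A*P*y*P*X)))
   = - (z*(1-A*P*X)*(1-B*P*X)*(w-P*X)*y*(y-X))/((1-z*w*y)*(1-P*X)*(1-z*X)*(1-A*P*w*X)*(1-A*P*y*P*X))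
     + y/(1-z*w*y)"
proof -
  define D1 where "D1 = 1-P*X"
  define D2 where "D2 = B-A*P*X"
  define D3 where "D3 = 1-A*P*w*X"
  define D4 where "D4 = 1-A*P*P*y*X"
  define D5 where "D5 = 1-A*P*y"
  define D6 where "D6 = B-A*P*w*y"
  define N3 where "N3 = B-A*P*y"
  define E where "E = 1-A*P^2*X^2"
  have e1: "1 - z*X = D2/B" "1 - z*w*y = D6/B" "1 - z*y = N3/B"
    using nz(1) unfolding z_def D2_def D6_def N3_def by (simp_all add: field_simps)
  have e2: "1-P*X = D1" "1-A*P*w*X = D3" "1-A*P*y*P*X = D4" "1 - A*P*y = D5" "1-A*P^2*X^2 = E"
    by (simp_all add: D1_def D3_def D4_def D5_def E_def mult_ac)
  have n: "D1 \<noteq> 0" "D2 \<noteq> 0" "D3 \<noteq> 0" "D4 \<noteq> 0" "D5 \<noteq> 0" "D6 \<noteq> 0"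
    using nz e1 e2 by auto
  have poly: "E*(y-X)*D4*D6 - N3*(1-A*P*w*y)*E*(P*y-1)*X
    = -A*P*(1-A*P*X)*(1-B*P*X)*(w-P*X)*y*(y-X)+y*D1*D2*D3*D4"
    unfolding D1_def D2_def D3_def D4_def D6_def N3_def E_def by (rule red_poly)
  have L: "E/(D1*(D2/B)*D3) * (y-X) - (N3/B)*(1 - A*P*w*y)/(D5*(D6/B)) *
       (E/(D1*(D2/B)*D3) * ((P*y-1)*X*D5/D4))
     = (E*(y-X)*D4*D6 - N3*(1-A*P*w*y)*E*(P*y-1)*X) * B / (D1*D2*D3*D4*D6)"
    using n nz(1) by (simp add: field_simps)
  have R: "- ((A*P/B)*(1-A*P*X)*(1-B*P*X)*(w-P*X)*y*(y-X))/((D6/B)*D1*(D2/B)*D3*D4) + y/(D6/B)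
     = (-A*P*(1-A*P*X)*(1-B*P*X)*(w-P*X)*y*(y-X)+y*D1*D2*D3*D4) * B / (D1*D2*D3*D4*D6)"
    using n nz(1) by (simp add: field_simps)
  show ?thesis
    unfolding e1 e2 using L R poly by (simp add: z_def)
qed

definition uu :: "complex \<Rightarrow> complex \<Rightarrow> complex \<Rightarrow> complex \<Rightarrow> complex \<Rightarrow> nat \<Rightarrow> complex" where
  "uu P A B w y k = (1 - A*P^(2*k))/(1-A) * pc P A k * pc P B k / (pc P P k * pc P (A*P/B) k)
     * (A*P/B)^k * Pm P w k / pc P (A*P*w) k * Pm P y k / pc P (A*P*y) k"

fun GG :: "complex \<Rightarrow> complex \<Rightarrow> complex \<Rightarrow> complex \<Rightarrow> complex \<Rightarrow> nat \<Rightarrow> complex" where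
  "GG P A B w y 0 = 0"
| "GG P A B w y (Suc m) = - ((A*P/B)^(Suc m) * pc P A (Suc m) * pc P B (Suc m) * Pm P w (Suc m) * y * Pm P y m)
     / ((1-A) * (1 - (A*P/B)*w*y) * pc P P m * pc P (A*P/B) m * pc P (A*P*w) m * pc P (A*P*y) (Suc m))"

definition RR :: "complex \<Rightarrow> complex \<Rightarrow> complex \<Rightarrow> complex \<Rightarrow> complex \<Rightarrow> complex" where
  "RR P A B w y = (1 - (A*P/B)*y)*(1 - A*P*w*y)/((1 - A*P*y)*(1 - (A*P/B)*w*y))"

lemma uu_sym: "uu P A B w y k = uu P A B y w k"
  by (simp add: uu_def field_simps)

lemma aux_tel:
  fixes Z a r b c y x :: complex
  assumes "a - r*b = c + y/x"
  shows "Z*a - r*(Z*b) = Z*c - Z*(-y/x)"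
proof -
  have "Z*a - r*(Z*b) = Z*(a-r*b)" by (simp add: algebra_simps)
  also have "\<dots> = Z*(c + y/x)" using assms by simp
  also have "\<dots> = Z*c - Z*(-y/x)" by (simp add: algebra_simps)
  finally show ?thesis .
qed

lemma telescope:
  fixes P A B w y :: complex
  defines "z \<equiv> A*P/B"
  assumes B: "B \<noteq> 0" and A: "A \<noteq> 1"
    and hP: "\<And>j. P^(Suc j) \<noteq> 1" and hz: "\<And>j. z*P^j \<noteq> 1"
    and hw: "\<And>j. A*P*w*P^j \<noteq> 1" and hy: "\<And>j. A*P*y*P^j \<noteq> 1"
    and hzwy: "z*w*y \<noteq> 1"
  shows "uu P A B w y k - RR P A B w y * uu P A B w (P*y) k = GG P A B w y (Suc k) - GG P A B w y k"
proof (cases k)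
  case 0
  have n2: "1 - A*P*y \<noteq> 0" using hy[of 0] by auto
  have n3: "B - A*P*w*y \<noteq> 0" using hzwy B unfolding z_def by (auto simp: field_simps)
  have n1: "1 - A \<noteq> 0" using A by auto
  have u0: "uu P A B w v 0 = 1" for v using n1 by (simp add: uu_def)
  have e: "1 - A*P/B*y = (B - A*P*y)/B" "1 - A*P/B*w*y = (B-A*P*w*y)/B"
    using B by (simp_all add: field_simps)
  define D5 where "D5 = 1 - A*P*y"
  define D6 where "D6 = B - A*P*w*y"
  have n5: "D5 \<noteq> 0" "D6 \<noteq> 0" using n2 n3 by (simp_all add: D5_def D6_def)
  have r: "RR P A B w y = (B - A*P*y)*(1 - A*P*w*y)/(D5*D6)"
    unfolding RR_def e D5_def[symmetric] D6_def[symmetric] using B by simp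
  have g: "GG P A B w y (Suc 0) = -(A*P*(1-B)*(w-1)*y)/(D6*D5)"
    unfolding GG.simps e D5_def[symmetric] D6_def[symmetric] using B n1
    by (simp add: pc_Suc Pm_Suc D5_def)
  have "1 - RR P A B w y = GG P A B w y (Suc 0)"
    unfolding r g using n5 
    by (simp add: field_simps) (simp add: D5_def D6_def algebra_simps)
  then show ?thesis using 0 u0 by simp
next
  case (Suc m)
  define X where "X = P^m"
  define al where "al = pc P A m"
  define be where "be = pc P B m"
  define pp where "pp = pc P P m"
  define ga where "ga = pc P z m"
  define si where "si = Pm P w m"
  define omg where "omg = pc P (A*P*w) m"
  define rh where "rh = Pm P y m"
  define ch where "ch = pc P (A*P*y) m"
  have nzp: "pp \<noteq> 0" "ga \<noteq> 0" "omg \<noteq> 0" "ch \<noteq> 0"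
    unfolding pp_def ga_def omg_def ch_def
    by (auto intro!: pc_nonzero simp: hz hw hy) (metis hP power_Suc)
  have nzs: "1 - P*X \<noteq> 0" "1 - z*X \<noteq> 0" "1 - A*P*w*X \<noteq> 0" "1 - A*P*y*X \<noteq> 0"
    "1 - A*P*y*P*X \<noteq> 0" "1 - A*P*y \<noteq> 0" "1 - z*w*y \<noteq> 0" "1 - A \<noteq> 0"
    unfolding X_def using hP[of m] hz[of m] hw[of m] hy[of m] hy[of "Suc m"] hy[of 0] hzwy A
    by (auto simp: mult_ac)
  define Z where "Z = z^m*z * al * be * si * rh * (1-A*X)*(1-B*X)*(w-X) / (pp * ga * omg * ch * (1-A) * (1-A*P*y*X))"
  have p2: "P^(2*Suc m) = P^2*X^2"
  proof -
    have "P^(2*Suc m) = (P^(Suc m))^2" by (simp only: power_mult[symmetric] mult.commute)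
    also have "\<dots> = P^2*X^2" by (simp add: X_def power_mult_distrib)
    finally show ?thesis .
  qed
  have u1e: "uu P A B w y k = (1 - A*P^2*X^2)/(1-A) * (al*(1-A*X)) * (be*(1-B*X)) / ((pp*(1-P*X)) * (ga*(1-z*X)))
      * (z^m*z) * (si*(w-X)) / (omg*(1-A*P*w*X)) * (rh*(y-X)) / (ch*(1-A*P*y*X))"
    unfolding uu_def Suc z_def[symmetric] p2
    by (simp add: pc_Suc Pm_Suc al_def be_def pp_def ga_def si_def omg_def rh_def ch_def X_def mult_ac)
  have u1: "uu P A B w y k = Z * ((1-A*P^2*X^2)/((1-P*X)*(1-z*X)*(1-A*P*w*X)) * (y-X))"
    unfolding u1e Z_def using nzp nzs by (simp add: field_simps)
  have pcs: "pc P (A*P*(P*y)) (Suc m) = ch*(1-A*P*y*X)*(1-A*P*y*P*X)/(1-A*P*y)"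
  proof -
    have E1: "pc P (A*P*y) (Suc (Suc m)) = (1 - A*P*y) * pc P (A*P*y*P) (Suc m)" by (rule pc_Suc')
    have E2: "pc P (A*P*y) (Suc (Suc m)) = ch*(1-A*P*y*X)*(1-A*P*y*P*X)"
      by (simp add: pc_Suc ch_def X_def mult_ac)
    have E3: "A*P*y*P = A*P*(P*y)" by (simp add: mult_ac)
    have "(1-A*P*y) * pc P (A*P*(P*y)) (Suc m) = ch*(1-A*P*y*X)*(1-A*P*y*P*X)"
      using E1 E2 E3 by metis
    then show ?thesis using nzs(6) by (simp add: eq_divide_eq mult.commute)
  qed
  have u2e: "uu P A B w (P*y) k = (1 - A*P^2*X^2)/(1-A) * (al*(1-A*X)) * (be*(1-B*X)) / ((pp*(1-P*X)) * (ga*(1-z*X)))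
      * (z^m*z) * (si*(w-X)) / (omg*(1-A*P*w*X)) * ((P*y-1)*X*rh) / (ch*(1-A*P*y*X)*(1-A*P*y*P*X)/(1-A*P*y))"
    unfolding uu_def Suc z_def[symmetric] p2 pcs Pm_shift
    by (simp add: pc_Suc Pm_Suc al_def be_def pp_def ga_def si_def omg_def rh_def ch_def X_def mult_ac)
  have u2: "uu P A B w (P*y) k = Z * ((1-A*P^2*X^2)/((1-P*X)*(1-z*X)*(1-A*P*w*X)) * ((P*y-1)*X*(1-A*P*y)/(1-A*P*y*P*X)))"
    unfolding u2e Z_def using nzp nzs by (simp add: field_simps)
  have g2e: "GG P A B w y (Suc k) = - ((z^m*z*z) * (al*(1-A*X)*(1-A*P*X)) * (be*(1-B*X)*(1-B*P*X)) * (si*(w-X)*(w-P*X)) * y * (rh*(y-X)))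
        / ((1-A) * (1 - z*w*y) * (pp*(1-P*X)) * (ga*(1-z*X)) * (omg*(1-A*P*w*X)) * (ch*(1-A*P*y*X)*(1-A*P*y*P*X)))"
    unfolding GG.simps Suc z_def[symmetric]
    by (simp add: pc_Suc Pm_Suc al_def be_def pp_def ga_def si_def omg_def rh_def ch_def X_def mult_ac)
  have g2: "GG P A B w y (Suc k) = Z * (- (z*(1-A*P*X)*(1-B*P*X)*(w-P*X)*y*(y-X))/((1-z*w*y)*(1-P*X)*(1-z*X)*(1-A*P*w*X)*(1-A*P*y*P*X)))"
    unfolding g2e Z_def using nzp nzs by (simp add: field_simps)
  have g1e: "GG P A B w y k = - ((z^m*z) * (al*(1-A*X)) * (be*(1-B*X)) * (si*(w-X)) * y * rh)
        / ((1-A) * (1 - z*w*y) * pp * ga * omg * (ch*(1-A*P*y*X)))"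
    unfolding GG.simps Suc z_def[symmetric]
    by (simp add: pc_Suc Pm_Suc al_def be_def pp_def ga_def si_def omg_def rh_def ch_def X_def mult_ac)
  have g1: "GG P A B w y k = Z * (- y/(1-z*w*y))"
    unfolding g1e Z_def using nzp nzs by (simp add: divide_simps)
  have red: "(1-A*P^2*X^2)/((1-P*X)*(1-z*X)*(1-A*P*w*X)) * (y-X)
     - (1 - z*y)*(1 - A*P*w*y)/((1 - A*P*y)*(1 - z*w*y)) *
       ((1-A*P^2*X^2)/((1-P*X)*(1-z*X)*(1-A*P*w*X)) * ((P*y-1)*X*(1-A*P*y)/(1-A*P*y*P*X)))
   = - (z*(1-A*P*X)*(1-B*P*X)*(w-P*X)*y*(y-X))/((1-z*w*y)*(1-P*X)*(1-z*X)*(1-A*P*w*X)*(1-A*P*y*P*X))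
     + y/(1-z*w*y)"
    unfolding z_def by (rule red_tel) (use B nzs in \<open>simp_all add: z_def\<close>)
  have rr: "RR P A B w y = (1 - z*y)*(1 - A*P*w*y)/((1 - A*P*y)*(1 - z*w*y))"
    by (simp add: RR_def z_def)
  show ?thesis
    unfolding u1 u2 g1 g2 rr by (rule aux_tel[OF red])
qed

lemma ratio_abs0:
  fixes a0 a1 a2 b2 d1 d2 wn d3 yn d4 e z zk al be pp ga gsg omg rh ch :: complex
  assumes "a0 \<noteq> 0" "pp \<noteq> 0" "ga \<noteq> 0" "omg \<noteq> 0" "ch \<noteq> 0" "e \<noteq> 0" "d1 \<noteq> 0" "d2 \<noteq> 0" "d3 \<noteq> 0" "d4 \<noteq> 0"
  shows "a1/a0 * (al*a2)*(be*b2)/((pp*d1)*(ga*d2))*(zk*z)*(gsg*wn)/(omg*d3)*(rh*yn)/(ch*d4)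
     = e/a0*al*be/(pp*ga)*zk*gsg/omg*rh/ch*(a1/e*(a2*b2/(d1*d2)*z*(wn/d3))*(yn/d4))"
  using assms by (simp add: field_simps)

lemma ratio_abs:
  fixes A B P X z zk al be pp ga gsg omg rh ch w y :: complex
  assumes "1 - A \<noteq> 0" "pp \<noteq> 0" "ga \<noteq> 0" "omg \<noteq> 0" "ch \<noteq> 0" "1 - A*X^2 \<noteq> 0" "1 - P*X \<noteq> 0" "1 - z*X \<noteq> 0"
   "1 - A*P*w*X \<noteq> 0" "1 - A*P*y*X \<noteq> 0"
  shows "(1 - A*P^2*X^2)/(1-A) * (al*(1-A*X)) * (be*(1-B*X)) / ((pp*(1-P*X)) * (ga*(1-z*X))) * (zk*z) * (gsg*(w-X)) / (omg*(1-A*P*w*X)) * (rh*(y-X)) / (ch*(1-A*P*y*X))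
   = (1 - A*X^2)/(1-A) * al * be / (pp * ga) * zk * gsg / omg * rh / ch * ((1 - A*P^2*X^2)/(1 - A*X^2) * ((1-A*X)*(1-B*X)/((1-P*X)*(1-z*X)) * z * ((w-X)/(1-A*P*w*X))) * ((y-X)/(1-A*P*y*X)))"
  by (rule ratio_abs0) (use assms in auto)

locale qset =
  fixes r :: real and A B :: complex
  assumes r0: "0 < r" and r1: "r < 1" and B0: "B \<noteq> 0"
    and hA: "\<And>j. A * complex_of_real r ^ j \<noteq> 1"
    and hz: "\<And>j. (A * complex_of_real r / B) * complex_of_real r ^ j \<noteq> 1"
begin

abbreviation "PP \<equiv> complex_of_real r"
abbreviation "zz \<equiv> A * PP / B"

lemma nP: "norm PP = r" using r0 by simp
lemma nP1: "norm PP < 1" using r0 r1 by simp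
lemma Ppow0: "(\<lambda>n. PP ^ n) \<longlonglongrightarrow> 0" by (rule LIMSEQ_power_zero[OF nP1])
lemma hP: "PP ^ Suc j \<noteq> 1"
proof -
  have "norm (PP ^ Suc j) < 1" using r0 r1 by (simp add: norm_power power_Suc_less_one del: power_Suc)
  then show ?thesis by auto
qed
lemma A1: "A \<noteq> 1" using hA[of 0] by simp

definition psi :: "complex \<Rightarrow> nat \<Rightarrow> complex" where
  "psi w k = (1-A*PP^k)*(1-B*PP^k)/((1-PP*PP^k)*(1-zz*PP^k)) * zz * ((w-PP^k)/(1-A*PP*w*PP^k))"

definition theta :: "complex \<Rightarrow> complex \<Rightarrow> nat \<Rightarrow> complex" where
  "theta w y k = (1 - A*PP^2*(PP^k)^2)/(1 - A*(PP^k)^2) * psi w k * ((y-PP^k)/(1-A*PP*y*PP^k))"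

lemma psi_lim: "psi w \<longlonglongrightarrow> zz * w"
proof -
  have "psi w \<longlonglongrightarrow> (1-A*0)*(1-B*0)/((1-PP*0)*(1-zz*0)) * zz * ((w-0)/(1-A*PP*w*0))"
    unfolding psi_def by (intro tendsto_intros Ppow0) auto
  then show ?thesis by simp
qed

lemma theta_lim: "theta w y \<longlonglongrightarrow> zz * w * y"
proof -
  have "theta w y \<longlonglongrightarrow> (1 - A*PP^2*0^2)/(1 - A*0^2) * (zz*w) * ((y-0)/(1-A*PP*y*0))"
    unfolding theta_def by (intro tendsto_intros Ppow0 psi_lim) auto
  then show ?thesis by simp
qed

lemma uu_Suc:
  assumes hw: "\<And>j. A*PP*w*PP^j \<noteq> 1" and hy: "\<And>j. A*PP*y*PP^j \<noteq> 1"
  shows "uu PP A B w y (Suc k) = uu PP A B w y k * theta w y k"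
proof -
  define X where "X = PP^k"
  have p2b: "PP^(2*k) = X^2" by (simp only: X_def power_mult[symmetric] mult.commute)
  have "PP^(2*Suc k) = (PP^(Suc k))^2" by (simp only: power_mult[symmetric] mult.commute)
  also have "\<dots> = PP^2*X^2" by (simp add: X_def power_mult_distrib)
  finally have p2: "PP^(2*Suc k) = PP^2*X^2" "PP^(2*k) = X^2" using p2b by auto
  have nz: "pc PP PP k \<noteq> 0" "pc PP zz k \<noteq> 0" "pc PP (A*PP*w) k \<noteq> 0" "pc PP (A*PP*y) k \<noteq> 0"
    apply (rule pc_nonzero, metis hP power_Suc)
    apply (rule pc_nonzero, rule hz) apply (rule pc_nonzero, rule hw) apply (rule pc_nonzero, rule hy) done
  have nz2: "1 - A*X^2 \<noteq> 0" "1 - PP*X \<noteq> 0" "1 - zz*X \<noteq> 0" "1 - A*PP*w*X \<noteq> 0" "1 - A*PP*y*X \<noteq> 0" "1 - A \<noteq> 0"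
    using hA[of "2*k"] hP[of k] hz[of k] hw[of k] hy[of k] A1 p2(2)
    by (auto simp: X_def mult_ac)
  define al where "al = pc PP A k"
  define be where "be = pc PP B k"
  define pp where "pp = pc PP PP k"
  define ga where "ga = pc PP zz k"
  define gsg where "gsg = Pm PP w k"
  define omg where "omg = pc PP (A*PP*w) k"
  define rh where "rh = Pm PP y k"
  define ch where "ch = pc PP (A*PP*y) k"
  have nz': "pp \<noteq> 0" "ga \<noteq> 0" "omg \<noteq> 0" "ch \<noteq> 0" using nz by (simp_all add: pp_def ga_def omg_def ch_def)
  have e1: "uu PP A B w y k = (1 - A*X^2)/(1-A) * al * be / (pp * ga) * zz^k * gsg / omg * rh / ch"
    unfolding uu_def p2 by (simp add: al_def be_def pp_def ga_def gsg_def omg_def rh_def ch_def)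
  have e2: "uu PP A B w y (Suc k) = (1 - A*PP^2*X^2)/(1-A) * (al*(1-A*X)) * (be*(1-B*X)) / ((pp*(1-PP*X)) * (ga*(1-zz*X)))
       * (zz^k*zz) * (gsg*(w-X)) / (omg*(1-A*PP*w*X)) * (rh*(y-X)) / (ch*(1-A*PP*y*X))"
    unfolding uu_def p2 by (simp add: pc_Suc Pm_Suc al_def be_def pp_def ga_def gsg_def omg_def rh_def ch_def X_def mult_ac)
  have e3: "theta w y k = (1 - A*PP^2*X^2)/(1 - A*X^2) * ((1-A*X)*(1-B*X)/((1-PP*X)*(1-zz*X)) * zz * ((w-X)/(1-A*PP*w*X))) * ((y-X)/(1-A*PP*y*X))"
    unfolding theta_def psi_def X_def ..
  show ?thesis
    unfolding e1 e2 e3 using nz' nz2 by (intro ratio_abs) auto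
qed

end

lemma weier_ineq:
  fixes a :: "nat \<Rightarrow> real"
  assumes "\<And>j. 0 \<le> a j" "\<And>j. a j \<le> 1"
  shows "(\<Prod>j<k. 1 - a j) \<ge> 1 - (\<Sum>j<k. a j)"
proof (induction k)
  case 0 then show ?case by simp
next
  case (Suc k)
  have "(\<Prod>j<Suc k. 1 - a j) = (\<Prod>j<k. 1 - a j) * (1 - a k)" by simp
  also have "\<dots> \<ge> (1 - (\<Sum>j<k. a j)) * (1 - a k)"
    using Suc assms[of k] by (intro mult_right_mono) auto
  finally have "(\<Prod>j<Suc k. 1 - a j) \<ge> (1 - (\<Sum>j<k. a j)) * (1 - a k)" .
  moreover have "(1 - (\<Sum>j<k. a j)) * (1 - a k) \<ge> 1 - (\<Sum>j<Suc k. a j)"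
  proof -
    have "(\<Sum>j<k. a j) * a k \<ge> 0" using assms by (simp add: sum_nonneg)
    then show ?thesis by (simp add: algebra_simps)
  qed
  ultimately show ?case by linarith
qed

lemma abs_GG:
  fixes a0 e d5 d6 zk z al be pp ga gsg omg rh ch a2 b2 wn y :: complex
  assumes "a0 \<noteq> 0" "pp \<noteq> 0" "ga \<noteq> 0" "omg \<noteq> 0" "ch \<noteq> 0" "e \<noteq> 0" "d5 \<noteq> 0" "d6 \<noteq> 0"
  shows "- ((zk*z) * (al*a2) * (be*b2) * (gsg*wn) * y * rh) / (a0 * d6 * pp * ga * omg * (ch*d5))
    = e/a0 * al * be / (pp * ga) * zk * gsg / omg * rh / ch * (- z * a2 * b2 * wn * y / (e * d6 * d5))"
  using assms by (simp add: field_simps)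

lemma abs_dd:
  fixes a2 b2 d1 d2 z zk al be pp ga gsg omg wn d3 :: complex
  assumes "pp \<noteq> 0" "ga \<noteq> 0" "omg \<noteq> 0" "d1 \<noteq> 0" "d2 \<noteq> 0" "d3 \<noteq> 0"
  shows "(al*a2) * (be*b2) / ((pp*d1) * (ga*d2)) * (zk*z) * (gsg*wn) / (omg*d3)
    = al * be / (pp * ga) * zk * gsg / omg * (a2*b2/(d1*d2) * z * (wn/d3))"
  using assms by (simp add: field_simps)

context qset
begin

definition dd :: "complex \<Rightarrow> nat \<Rightarrow> complex" where
  "dd w k = pc PP A k * pc PP B k / (pc PP PP k * pc PP zz k) * zz^k * Pm PP w k / pc PP (A*PP*w) k"

lemma uu_alt: "uu PP A B w y k = (1 - A*PP^(2*k))/(1-A) * dd w k * (Pm PP y k / pc PP (A*PP*y) k)"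
  unfolding uu_def dd_def by (simp add: field_simps)

lemma nz_pc:
  assumes "\<And>j. c * PP^j \<noteq> 1" shows "pc PP c k \<noteq> 0"
  using pc_nonzero assms by blast

lemma nz_basic: "pc PP PP k \<noteq> 0" "pc PP zz k \<noteq> 0" "pc PP A k \<noteq> 0"
    apply (rule nz_pc, metis hP power_Suc)
   apply (rule nz_pc[OF hz]) apply (rule nz_pc[OF hA]) done

lemma dd_Suc:
  assumes hw: "\<And>j. A*PP*w*PP^j \<noteq> 1"
  shows "dd w (Suc k) = dd w k * psi w k"
proof -
  define X where "X = PP^k"
  define al where "al = pc PP A k"
  define be where "be = pc PP B k"
  define pp where "pp = pc PP PP k"
  define ga where "ga = pc PP zz k"
  define gsg where "gsg = Pm PP w k"
  define omg where "omg = pc PP (A*PP*w) k"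
  have n1: "omg \<noteq> 0" unfolding omg_def by (rule nz_pc) (use hw in \<open>simp add: mult_ac\<close>)
  have n2: "1 - PP*X \<noteq> 0" "1 - zz*X \<noteq> 0" "1 - A*PP*w*X \<noteq> 0"
    using hP[of k] hz[of k] hw[of k] by (auto simp: X_def)
  have n3: "pp \<noteq> 0" "ga \<noteq> 0" using nz_basic by (simp_all add: pp_def ga_def)
  have e1: "dd w (Suc k) = (al*(1-A*X)) * (be*(1-B*X)) / ((pp*(1-PP*X)) * (ga*(1-zz*X))) * (zz^k*zz) * (gsg*(w-X)) / (omg*(1-A*PP*w*X))"
    unfolding dd_def by (simp add: pc_Suc Pm_Suc al_def be_def pp_def ga_def gsg_def omg_def X_def mult_ac)
  have e2: "dd w k = al * be / (pp * ga) * zz^k * gsg / omg"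
    unfolding dd_def by (simp add: al_def be_def pp_def ga_def gsg_def omg_def)
  have e3: "psi w k = (1-A*X)*(1-B*X)/((1-PP*X)*(1-zz*X)) * zz * ((w-X)/(1-A*PP*w*X))"
    unfolding psi_def X_def ..
  show ?thesis unfolding e1 e2 e3 by (rule abs_dd) (use n1 n2 n3 in auto)
qed

lemma summ_uu:
  assumes hw: "\<And>j. A*PP*w*PP^j \<noteq> 1" and hy: "\<And>j. A*PP*y*PP^j \<noteq> 1"
    and lt: "norm (zz*w*y) < 1"
  shows "summable (uu PP A B w y)"
proof -
  define c where "c = (1 + norm (zz*w*y))/2"
  have c1: "c < 1" using lt by (simp add: c_def)
  have "(\<lambda>k. norm (theta w y k)) \<longlonglongrightarrow> norm (zz*w*y)"
    by (intro tendsto_norm theta_lim)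
  moreover have "norm (zz*w*y) < c" using lt by (simp add: c_def)
  ultimately have "eventually (\<lambda>k. norm (theta w y k) < c) sequentially"
    by (rule order_tendstoD)
  then obtain N where N: "\<And>k. k \<ge> N \<Longrightarrow> norm (theta w y k) < c"
    by (auto simp: eventually_sequentially)
  show ?thesis
  proof (rule summable_ratio_test[OF c1])
    fix n assume "n \<ge> N"
    have "norm (uu PP A B w y (Suc n)) = norm (uu PP A B w y n) * norm (theta w y n)"
      by (simp add: uu_Suc[OF hw hy] norm_mult)
    also have "\<dots> \<le> norm (uu PP A B w y n) * c"
      using N[OF \<open>n \<ge> N\<close>] by (intro mult_left_mono) auto
    finally show "norm (uu PP A B w y (Suc n)) \<le> c * norm (uu PP A B w y n)"
      by (simp add: mult.commute)
  qed
qed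

definition phi :: "complex \<Rightarrow> complex \<Rightarrow> nat \<Rightarrow> complex" where
  "phi w y m = - zz * (1-A*PP^m) * (1-B*PP^m) * (w-PP^m) * y / ((1 - A*(PP^m)^2) * (1 - zz*w*y) * (1-A*PP*y*PP^m))"

lemma GG_phi:
  assumes hw: "\<And>j. A*PP*w*PP^j \<noteq> 1" and hy: "\<And>j. A*PP*y*PP^j \<noteq> 1"
    and hzwy: "zz*w*y \<noteq> 1"
  shows "GG PP A B w y (Suc m) = uu PP A B w y m * phi w y m"
proof -
  define X where "X = PP^m"
  define al where "al = pc PP A m"
  define be where "be = pc PP B m"
  define pp where "pp = pc PP PP m"
  define ga where "ga = pc PP zz m"
  define gsg where "gsg = Pm PP w m"
  define omg where "omg = pc PP (A*PP*w) m"
  define rh where "rh = Pm PP y m"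
  define ch where "ch = pc PP (A*PP*y) m"
  have p2: "PP^(2*m) = X^2" by (simp only: X_def power_mult[symmetric] mult.commute)
  have n1: "omg \<noteq> 0" unfolding omg_def by (rule nz_pc) (use hw in \<open>simp add: mult_ac\<close>)
  have n1': "ch \<noteq> 0" unfolding ch_def by (rule nz_pc) (use hy in \<open>simp add: mult_ac\<close>)
  have n2: "1 - A \<noteq> 0" "1 - A*X^2 \<noteq> 0" "1 - zz*w*y \<noteq> 0" "1 - A*PP*y*X \<noteq> 0"
    using A1 hA[of "2*m"] hzwy hy[of m] p2 by (auto simp: X_def)
  have n3: "pp \<noteq> 0" "ga \<noteq> 0" using nz_basic by (simp_all add: pp_def ga_def)
  have e1: "GG PP A B w y (Suc m) = - ((zz^m*zz) * (al*(1-A*X)) * (be*(1-B*X)) * (gsg*(w-X)) * y * rh) / ((1-A) * (1 - zz*w*y) * pp * ga * omg * (ch*(1-A*PP*y*X)))"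
    unfolding GG.simps by (simp add: pc_Suc Pm_Suc al_def be_def pp_def ga_def gsg_def omg_def rh_def ch_def X_def mult_ac)
  have e2: "uu PP A B w y m = (1 - A*X^2)/(1-A) * al * be / (pp * ga) * zz^m * gsg / omg * rh / ch"
    unfolding uu_def p2 by (simp add: al_def be_def pp_def ga_def gsg_def omg_def rh_def ch_def)
  have e3: "phi w y m = - zz * (1-A*X) * (1-B*X) * (w-X) * y / ((1 - A*X^2) * (1 - zz*w*y) * (1-A*PP*y*X))"
    unfolding phi_def X_def ..
  show ?thesis unfolding e1 e2 e3 by (rule abs_GG) (use n1 n1' n2 n3 in auto)
qed

lemma GG_lim:
  assumes hw: "\<And>j. A*PP*w*PP^j \<noteq> 1" and hy: "\<And>j. A*PP*y*PP^j \<noteq> 1"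
    and lt: "norm (zz*w*y) < 1"
  shows "GG PP A B w y \<longlonglongrightarrow> 0"
proof -
  have hzwy: "zz*w*y \<noteq> 1" using lt by auto
  have "uu PP A B w y \<longlonglongrightarrow> 0" by (rule summable_LIMSEQ_zero[OF summ_uu[OF hw hy lt]])
  moreover have "phi w y \<longlonglongrightarrow> - zz * (1-A*0) * (1-B*0) * (w-0) * y / ((1 - A*0^2) * (1 - zz*w*y) * (1-A*PP*y*0))"
    unfolding phi_def using hzwy by (intro tendsto_intros Ppow0) auto
  ultimately have "(\<lambda>m. uu PP A B w y m * phi w y m) \<longlonglongrightarrow> 0 * (- zz * (1-A*0) * (1-B*0) * (w-0) * y / ((1 - A*0^2) * (1 - zz*w*y) * (1-A*PP*y*0)))"
    by (rule tendsto_mult)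
  moreover have eq: "\<And>m. GG PP A B w y (Suc m) = uu PP A B w y m * phi w y m"
    by (rule GG_phi[OF hw hy hzwy])
  ultimately have "(\<lambda>m. GG PP A B w y (Suc m)) \<longlonglongrightarrow> 0"
    by (simp only: eq mult_zero_left)
  then show ?thesis by (rule LIMSEQ_imp_Suc)
qed

lemma recur:
  assumes hw: "\<And>j. A*PP*w*PP^j \<noteq> 1" and hy: "\<And>j. A*PP*y*PP^j \<noteq> 1"
    and lt: "norm (zz*w*y) < 1"
  shows "suminf (uu PP A B w y) = RR PP A B w y * suminf (uu PP A B w (PP*y))"
proof -
  have hy': "\<And>j. A*PP*(PP*y)*PP^j \<noteq> 1"
  proof -
    fix j show "A*PP*(PP*y)*PP^j \<noteq> 1" using hy[of "Suc j"] by (simp add: mult_ac)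
  qed
  have lt': "norm (zz*w*(PP*y)) < 1"
  proof -
    have "zz*w*(PP*y) = PP*(zz*w*y)" by (simp add: mult_ac)
    then have "norm (zz*w*(PP*y)) = r * norm (zz*w*y)" using r0 by (simp only: norm_mult nP)
    also have "\<dots> \<le> norm (zz*w*y)" using r0 r1 by (intro mult_left_le_one_le) auto
    finally show ?thesis using lt by linarith
  qed
  have hzwy: "zz*w*y \<noteq> 1" using lt by auto
  have s1: "(\<lambda>k. uu PP A B w y k - RR PP A B w y * uu PP A B w (PP*y) k) sums
      (suminf (uu PP A B w y) - RR PP A B w y * suminf (uu PP A B w (PP*y)))"
    by (intro sums_diff sums_mult summable_sums summ_uu hw hy hy' lt lt')
  have s2: "(\<lambda>k. uu PP A B w y k - RR PP A B w y * uu PP A B w (PP*y) k) sums (0 - GG PP A B w y 0)"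
    unfolding telescope[OF B0 A1 hP hz hw hy hzwy]
    by (rule telescope_sums[OF GG_lim[OF hw hy lt]])
  from sums_unique2[OF s1 s2] show ?thesis by simp
qed

end

context qset
begin

lemma nPj: "norm (PP^j) = r^j" using r0 by (simp add: norm_power)

lemma pc_lower:
  assumes "norm c \<le> (1-r)/2"
  shows "norm (pc PP c k) \<ge> 1/2"
proof -
  have "norm (pc PP c k) = (\<Prod>j<k. norm (1 - c*PP^j))" unfolding pc_def by (simp add: prod_norm)
  also have "\<dots> \<ge> (\<Prod>j<k. 1 - norm c * r^j)"
  proof (rule prod_mono)
    fix j assume "j \<in> {..<k}"
    have "norm c * r^j \<le> norm c * 1" using r0 r1 by (intro mult_left_mono power_le_one) auto
    also have "\<dots> \<le> 1" using assms r0 by simp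
    finally have a: "0 \<le> 1 - norm c * r^j" by simp
    have "norm (c*PP^j) = norm c * r^j" by (simp only: norm_mult nPj)
    then have "1 - norm c * r^j \<le> norm (1 - c*PP^j)"
      using norm_triangle_ineq2[of 1 "c*PP^j"] by simp
    with a show "0 \<le> 1 - norm c * r^j \<and> 1 - norm c * r^j \<le> norm (1 - c*PP^j)" by simp
  qed
  finally have 1: "norm (pc PP c k) \<ge> (\<Prod>j<k. 1 - norm c * r^j)" .
  have 2: "(\<Prod>j<k. 1 - norm c * r^j) \<ge> 1 - (\<Sum>j<k. norm c * r^j)"
  proof (rule weier_ineq)
    fix j
    show "0 \<le> norm c * r^j" using r0 by simp
    have "norm c * r^j \<le> norm c * 1" using r0 r1 by (intro mult_left_mono power_le_one) auto
    also have "\<dots> \<le> 1" using assms r0 by simp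
    finally show "norm c * r^j \<le> 1" .
  qed
  have "(\<Sum>j<k. r^j) = (1 - r^k)/(1-r)" using r1 by (simp add: sum_gp_strict)
  also have "\<dots> \<le> 1/(1-r)" using r0 r1 by (intro divide_right_mono) auto
  finally have "norm c * (\<Sum>j<k. r^j) \<le> norm c * (1/(1-r))" by (intro mult_left_mono) auto
  then have "(\<Sum>j<k. norm c * r^j) \<le> norm c * (1/(1-r))" by (simp add: sum_distrib_left)
  also have "\<dots> \<le> (1-r)/2 * (1/(1-r))" using assms r1 by (intro mult_right_mono) auto
  also have "\<dots> = 1/2" using r1 by simp
  finally show ?thesis using 1 2 by linarith
qed

lemma Pm_upper:
  "norm (Pm PP y k) \<le> (\<Prod>j<k. norm y + r^j)"
proof -
  have "norm (Pm PP y k) = (\<Prod>j<k. norm (y - PP^j))" unfolding Pm_def by (simp add: prod_norm)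
  also have "\<dots> \<le> (\<Prod>j<k. norm y + r^j)"
  proof (rule prod_mono)
    fix j show "0 \<le> norm (y - PP^j) \<and> norm (y - PP^j) \<le> norm y + r^j"
      using norm_triangle_ineq4[of y "PP^j"] by (simp add: nPj)
  qed
  finally show ?thesis .
qed

end

context qset
begin

lemma uu_pointwise: "(\<lambda>N. uu PP A B w (PP^N*x0) k) \<longlonglongrightarrow> uu PP A B w 0 k"
proof -
  have l: "(\<lambda>N. PP^N*x0) \<longlonglongrightarrow> 0" using tendsto_mult[OF Ppow0 tendsto_const[of x0]] by simp
  have a: "(\<lambda>N. Pm PP (PP^N*x0) k) \<longlonglongrightarrow> Pm PP 0 k" unfolding Pm_def by (intro tendsto_intros l)
  have b: "(\<lambda>N. pc PP (A*PP*(PP^N*x0)) k) \<longlonglongrightarrow> pc PP (A*PP*0) k" unfolding pc_def by (intro tendsto_intros l)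
  have "(\<lambda>N. Pm PP (PP^N*x0) k / pc PP (A*PP*(PP^N*x0)) k) \<longlonglongrightarrow> Pm PP 0 k / pc PP (A*PP*0) k"
    by (rule tendsto_divide[OF a b]) simp
  from tendsto_mult[OF tendsto_const this, of "(1 - A*PP^(2*k))/(1-A) * dd w k"]
  show ?thesis by (simp only: uu_alt)
qed

lemma cont_orbit:
  assumes hw: "\<And>j. A*PP*w*PP^j \<noteq> 1" and lt: "norm (zz*w*x0) < 1"
  shows "(\<lambda>N. suminf (uu PP A B w (PP^N*x0))) \<longlonglongrightarrow> suminf (uu PP A B w 0)"
proof -
  define C where "C = 2*(1 + norm A)/norm (1-A)"
  define M where "M k = C * norm (dd w k) * (\<Prod>j<k. norm x0 + r^j)" for k
  have C0: "C \<ge> 0" by (simp add: C_def)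
  have summM: "summable M"
  proof -
    define c where "c = (1 + norm (zz*w*x0))/2"
    have c1: "c < 1" using lt by (simp add: c_def)
    have "(\<lambda>k. norm (psi w k) * (norm x0 + r^k)) \<longlonglongrightarrow> norm (zz*w) * (norm x0 + 0)"
      using r0 r1 by (intro tendsto_intros psi_lim LIMSEQ_power_zero) auto
    moreover have "norm (zz*w) * (norm x0 + 0) < c"
    proof -
      have "norm (zz*w) * (norm x0 + 0) = norm (zz*w*x0)" by (simp only: norm_mult add_0_right)
      then show ?thesis using lt by (simp add: c_def)
    qed
    ultimately have "eventually (\<lambda>k. norm (psi w k) * (norm x0 + r^k) < c) sequentially"
      by (rule order_tendstoD)
    then obtain N where N: "\<And>k. k \<ge> N \<Longrightarrow> norm (psi w k) * (norm x0 + r^k) < c"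
      by (auto simp: eventually_sequentially)
    show ?thesis
    proof (rule summable_ratio_test[OF c1])
      fix n assume "n \<ge> N"
      have Mn: "M m \<ge> 0" for m unfolding M_def using C0 r0 by (intro mult_nonneg_nonneg prod_nonneg) auto
      have "M (Suc n) = M n * (norm (psi w n) * (norm x0 + r^n))"
        unfolding M_def dd_Suc[OF hw] by (simp add: norm_mult mult_ac)
      also have "\<dots> \<le> M n * c" using N[OF \<open>n \<ge> N\<close>] Mn[of n] by (intro mult_left_mono) auto
      finally show "norm (M (Suc n)) \<le> c * norm (M n)" using Mn[of n] Mn[of "Suc n"]
        by (simp add: mult.commute)
    qed
  qed
  obtain N0 where N0: "r^N0 * norm (A*PP*x0) \<le> (1-r)/2"
  proof -
    have "(\<lambda>N. r^N * norm (A*PP*x0)) \<longlonglongrightarrow> 0 * norm (A*PP*x0)"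
      using r0 r1 by (intro tendsto_intros LIMSEQ_power_zero) auto
    moreover have "(0::real) * norm (A*PP*x0) < (1-r)/2" using r1 by simp
    ultimately have "eventually (\<lambda>N. r^N * norm (A*PP*x0) < (1-r)/2) sequentially"
      by (rule order_tendstoD)
    then show ?thesis using that by (auto simp: eventually_sequentially dest!: less_imp_le)
  qed
  have bound: "norm (uu PP A B w (PP^N*x0) k) \<le> M k" if "N \<ge> N0" for k N
  proof -
    define y where "y = PP^N*x0"
    have ny: "norm y = r^N * norm x0" by (simp add: y_def norm_mult nPj)
    have rN: "r^N \<le> r^N0" using that r0 r1 by (intro power_decreasing) auto
    have "norm (A*PP*y) = r^N * norm (A*PP*x0)" by (simp add: y_def norm_mult nPj mult_ac)
    also have "\<dots> \<le> r^N0 * norm (A*PP*x0)" using rN by (intro mult_right_mono) auto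
    finally have "norm (A*PP*y) \<le> (1-r)/2" using N0 by linarith
    then have pcl: "norm (pc PP (A*PP*y) k) \<ge> 1/2" by (rule pc_lower)
    have "norm y \<le> norm x0" unfolding ny using r0 r1 by (intro mult_left_le_one_le power_le_one) auto
    then have pm: "norm (Pm PP y k) \<le> (\<Prod>j<k. norm x0 + r^j)"
      using Pm_upper[of y k] prod_mono[of "{..<k}" "\<lambda>j. norm y + r^j" "\<lambda>j. norm x0 + r^j"] r0
      by (smt (verit) zero_le_power norm_ge_zero)
    have n1: "norm (1 - A*PP^(2*k)) \<le> 1 + norm A"
    proof -
      have "norm (1 - A*PP^(2*k)) \<le> 1 + norm A * r^(2*k)"
        using norm_triangle_ineq4[of 1 "A*PP^(2*k)"] by (simp add: norm_mult nPj)
      also have "\<dots> \<le> 1 + norm A * 1" using r0 r1 by (intro add_left_mono mult_left_mono power_le_one) auto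
      finally show ?thesis by simp
    qed
    have nA: "norm (1-A) > 0" using A1 by simp
    have "norm (uu PP A B w y k) = norm (1 - A*PP^(2*k)) / norm (1-A) * norm (dd w k) * (norm (Pm PP y k) / norm (pc PP (A*PP*y) k))"
      unfolding uu_alt by (simp add: norm_mult norm_divide)
    also have "\<dots> \<le> (1 + norm A) / norm (1-A) * norm (dd w k) * ((\<Prod>j<k. norm x0 + r^j) / (1/2))"
    proof -
      have a: "norm (1 - A*PP^(2*k)) / norm (1-A) \<le> (1 + norm A) / norm (1-A)"
        using n1 nA by (intro divide_right_mono) auto
      have pn: "0 \<le> (\<Prod>j<k. norm x0 + r^j)" using r0 by (intro prod_nonneg) auto
      have b: "norm (Pm PP y k) / norm (pc PP (A*PP*y) k) \<le> (\<Prod>j<k. norm x0 + r^j) / (1/2)"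
        using pm pcl pn by (intro frac_le) auto
      have "norm (1 - A*PP^(2*k)) / norm (1-A) * norm (dd w k) \<le> (1 + norm A) / norm (1-A) * norm (dd w k)"
        using a by (intro mult_right_mono) auto
      then show ?thesis
        by (rule mult_mono[OF _ b]) auto
    qed
    also have "\<dots> = M k" by (simp add: M_def C_def)
    finally show ?thesis by (simp add: y_def)
  qed
  have ev: "eventually (\<lambda>(k,N). norm (uu PP A B w (PP^N*x0) k) \<le> M k) (at_top \<times>\<^sub>F sequentially)"
    unfolding eventually_prod_filter
    by (rule exI[of _ "\<lambda>_. True"], rule exI[of _ "\<lambda>N. N \<ge> N0"]) (auto intro: bound simp: eventually_sequentially)
  from tannerys_theorem[OF uu_pointwise ev summM]
  show ?thesis by simp
qed

end

context qset
begin

lemma iter: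
  assumes hw: "\<And>j. A*PP*w*PP^j \<noteq> 1" and hx: "\<And>j. A*PP*x0*PP^j \<noteq> 1"
    and lt: "norm (zz*w*x0) < 1"
  shows "suminf (uu PP A B w x0) = (\<Prod>n<N. RR PP A B w (PP^n*x0)) * suminf (uu PP A B w (PP^N*x0))"
proof (induction N)
  case 0 then show ?case by simp
next
  case (Suc N)
  have hy: "A*PP*(PP^N*x0)*PP^j \<noteq> 1" for j
    using hx[of "N+j"] by (simp add: power_add mult_ac)
  have "norm (zz*w*(PP^N*x0)) = r^N * norm (zz*w*x0)"
  proof -
    have "zz*w*(PP^N*x0) = PP^N*(zz*w*x0)" by (simp add: mult_ac)
    then show ?thesis by (simp only: norm_mult nPj)
  qed
  also have "\<dots> \<le> norm (zz*w*x0)" using r0 r1 by (intro mult_left_le_one_le power_le_one) auto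
  finally have lt': "norm (zz*w*(PP^N*x0)) < 1" using lt by linarith
  have eqp: "PP*(PP^N*x0) = PP^(Suc N)*x0" by simp
  have "suminf (uu PP A B w (PP^N*x0)) = RR PP A B w (PP^N*x0) * suminf (uu PP A B w (PP^(Suc N)*x0))"
    using recur[OF hw hy lt'] unfolding eqp .
  then show ?case using Suc by (simp add: mult_ac)
qed

lemma prodRR: "(\<Prod>n<N. RR PP A B w (PP^n*x0)) =
    pc PP (zz*x0) N * pc PP (A*PP*w*x0) N / (pc PP (A*PP*x0) N * pc PP (zz*w*x0) N)"
  unfolding RR_def pc_def by (simp add: prod_dividef prod.distrib mult_ac)

definition QQ :: "complex \<Rightarrow> complex \<Rightarrow> complex" where
  "QQ w x0 = qpoch_inf (zz*x0) PP * qpoch_inf (A*PP*w*x0) PP / (qpoch_inf (A*PP*x0) PP * qpoch_inf (zz*w*x0) PP)"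

lemma main_rel:
  assumes hw: "\<And>j. A*PP*w*PP^j \<noteq> 1" and hx: "\<And>j. A*PP*x0*PP^j \<noteq> 1"
    and lt: "norm (zz*w*x0) < 1"
  shows "suminf (uu PP A B w x0) = QQ w x0 * suminf (uu PP A B w 0)"
proof -
  have q1: "qpoch_inf (A*PP*x0) PP \<noteq> 0" using hx by (simp add: qpoch_nonzero_iff[OF nP1])
  have "zz*w*x0*PP^j \<noteq> 1" for j
  proof -
    have "norm (zz*w*x0*PP^j) = norm (zz*w*x0) * r^j" by (simp only: norm_mult nPj)
    also have "\<dots> \<le> norm (zz*w*x0)" using r0 r1 by (intro mult_right_le_one_le power_le_one) auto
    finally show ?thesis using lt by auto
  qed
  then have q2: "qpoch_inf (zz*w*x0) PP \<noteq> 0" by (simp add: qpoch_nonzero_iff[OF nP1])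
  have l1: "(\<lambda>N. \<Prod>n<N. RR PP A B w (PP^n*x0)) \<longlonglongrightarrow> QQ w x0"
    unfolding prodRR QQ_def using q1 q2
    by (intro tendsto_intros qpoch_lim[OF nP1]) simp
  have l2: "(\<lambda>N. suminf (uu PP A B w (PP^N*x0))) \<longlonglongrightarrow> suminf (uu PP A B w 0)"
    by (rule cont_orbit[OF hw lt])
  have "(\<lambda>N. (\<Prod>n<N. RR PP A B w (PP^n*x0)) * suminf (uu PP A B w (PP^N*x0))) \<longlonglongrightarrow> QQ w x0 * suminf (uu PP A B w 0)"
    by (rule tendsto_mult[OF l1 l2])
  then have "(\<lambda>N. suminf (uu PP A B w x0)) \<longlonglongrightarrow> QQ w x0 * suminf (uu PP A B w 0)"
    by (simp only: iter[OF hw hx lt, symmetric])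
  then show ?thesis by (simp add: LIMSEQ_const_iff)
qed

lemma F01: "suminf (uu PP A B 0 1) = 1"
proof -
  have "uu PP A B 0 1 = (\<lambda>k. if k = 0 then 1 else 0)"
  proof
    fix k show "uu PP A B 0 1 k = (if k = 0 then 1 else 0)"
    proof (cases k)
      case 0 then show ?thesis using A1 by (simp add: uu_def)
    next
      case (Suc m)
      have "Pm PP 1 (Suc m) = 0" unfolding Pm_def by (rule prod_zero) (auto intro: bexI[of _ 0])
      then show ?thesis using Suc by (simp add: uu_def)
    qed
  qed
  moreover have "(\<lambda>k. if k = 0 then (1::complex) else 0) sums 1"
    using sums_single[of 0 "\<lambda>_. 1::complex"] by simp
  ultimately show ?thesis by (simp add: sums_iff)
qed

theorem rogers:
  assumes hs: "\<And>j. A*PP* s*PP^j \<noteq> 1" and ht: "\<And>j. A*PP*t*PP^j \<noteq> 1"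
    and lt: "norm (zz* s*t) < 1"
  shows "uu PP A B s t sums
    (qpoch_inf (A*PP) PP * qpoch_inf (zz* s) PP * qpoch_inf (zz*t) PP * qpoch_inf (A*PP* s*t) PP /
     (qpoch_inf zz PP * qpoch_inf (A*PP* s) PP * qpoch_inf (A*PP*t) PP * qpoch_inf (zz* s*t) PP))"
proof -
  have h0: "A*PP*0*PP^j \<noteq> 1" for j by simp
  have h1: "A*PP*1*PP^j \<noteq> 1" for j using hA[of "Suc j"] by (simp add: mult_ac)
  have e1: "suminf (uu PP A B s t) = QQ s t * suminf (uu PP A B s 0)"
    by (rule main_rel[OF hs ht lt])
  have e2: "suminf (uu PP A B s 0) = suminf (uu PP A B 0 s)"
  proof -
    have "uu PP A B s 0 = uu PP A B 0 s" by (rule ext, rule uu_sym)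
    then show ?thesis by simp
  qed
  have e3: "suminf (uu PP A B 0 s) = QQ 0 s * suminf (uu PP A B 0 0)"
    by (rule main_rel[OF h0 hs]) simp
  have e4: "1 = QQ 0 1 * suminf (uu PP A B 0 0)"
    using main_rel[OF h0 h1] F01 by simp
  have qz: "qpoch_inf zz PP \<noteq> 0" using hz by (simp add: qpoch_nonzero_iff[OF nP1])
  have qa: "qpoch_inf (A*PP) PP \<noteq> 0" using h1 by (simp add: qpoch_nonzero_iff[OF nP1])
  have Q01: "QQ 0 1 = qpoch_inf zz PP / qpoch_inf (A*PP) PP"
    by (simp add: QQ_def qpoch_zero_arg)
  have e5: "suminf (uu PP A B 0 0) = qpoch_inf (A*PP) PP / qpoch_inf zz PP"
    using e4 qz qa unfolding Q01 by (simp add: field_simps)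
  have Q0s: "QQ 0 s = qpoch_inf (zz* s) PP / qpoch_inf (A*PP* s) PP"
    by (simp add: QQ_def qpoch_zero_arg)
  have Qst: "QQ s t = qpoch_inf (zz*t) PP * qpoch_inf (A*PP* s*t) PP / (qpoch_inf (A*PP*t) PP * qpoch_inf (zz* s*t) PP)"
    by (simp add: QQ_def)
  have "suminf (uu PP A B s t) = qpoch_inf (A*PP) PP * qpoch_inf (zz* s) PP * qpoch_inf (zz*t) PP * qpoch_inf (A*PP* s*t) PP /
     (qpoch_inf zz PP * qpoch_inf (A*PP* s) PP * qpoch_inf (A*PP*t) PP * qpoch_inf (zz* s*t) PP)"
    unfolding e1 e2 e3 e5 Q0s Qst by (simp add: field_simps)
  moreover have "summable (uu PP A B s t)" by (rule summ_uu[OF hs ht lt])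
  ultimately show ?thesis by (simp add: sums_iff)
qed

end

lemma qpow_add: "qpow q (x+y) = qpow q x * qpow q y"
  by (simp add: qpow_def distrib_right exp_add)

lemma qpow_nat: assumes "0 < q" shows "qpow q (2 * of_nat n) = complex_of_real (q^2) ^ n"
proof -
  have "qpow q (2 * of_nat n) = exp (of_nat n * (2 * complex_of_real (ln q)))"
    unfolding qpow_def by (simp only: mult_ac)
  also have "\<dots> = exp (2 * complex_of_real (ln q)) ^ n" by (rule exp_of_nat_mult)
  also have "exp (2 * complex_of_real (ln q)) = complex_of_real (exp (2 * ln q))"
    by (metis exp_of_real of_real_mult of_real_numeral)
  also have "exp (2 * ln q) = q^2"
  proof -
    have "exp (2*ln q) = exp (ln q) * exp (ln q)" by (metis mult_2 exp_add)
    then show ?thesis using assms by (simp add: power2_eq_square)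
  qed
  finally show ?thesis .
qed

lemma qpow_one: assumes "0 < q" shows "qpow q 1 = complex_of_real q"
proof -
  have "qpow q 1 = exp (complex_of_real (ln q))" unfolding qpow_def by simp
  also have "\<dots> = complex_of_real (exp (ln q))" by (rule exp_of_real)
  also have "exp (ln q) = q" using assms by simp
  finally show ?thesis .
qed

definition EE :: "real \<Rightarrow> complex \<Rightarrow> complex" where
  "EE q x = exp (x * complex_of_real (ln (1 - q\<^sup>2)))"

lemma EE_add: "EE q (x+y) = EE q x * EE q y"
  by (simp add: EE_def distrib_right exp_add)
lemma EE_minus: "EE q (-x) = 1 / EE q x"
  by (simp add: EE_def exp_minus divide_inverse)
lemma EE_diff: "EE q (x-y) = EE q x / EE q y"
  by (simp add: EE_def left_diff_distrib exp_diff)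
lemma EE_nz: "EE q x \<noteq> 0" by (simp add: EE_def)
lemma EE_nat: assumes "q^2 < 1" shows "EE q (of_nat n) = complex_of_real (1 - q^2) ^ n"
proof -
  have "EE q (of_nat n) = exp (complex_of_real (ln (1 - q\<^sup>2))) ^ n"
    unfolding EE_def by (rule exp_of_nat_mult)
  also have "exp (complex_of_real (ln (1 - q\<^sup>2))) = complex_of_real (1 - q^2)"
    using assms by (simp only: exp_of_real) simp
  finally show ?thesis .
qed
lemma EE_one: assumes "q^2 < 1" shows "EE q 1 = complex_of_real (1 - q^2)"
  using EE_nat[OF assms, of 1] by simp

lemma abs_qpg:
  fixes K Q0 Q1 E X :: complex
  assumes "K \<noteq> 0" "X \<noteq> 0"
  shows "(K / Q1 * (E * X)) / (K / Q0 * X) = Q0 / Q1 * E"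
  using assms by (cases "Q0 = 0"; cases "Q1 = 0") (simp_all add: field_simps)

lemma qpochg2_eq:
  assumes "qpoch_inf (complex_of_real (q\<^sup>2)) (complex_of_real (q\<^sup>2)) \<noteq> 0"
  shows "qpochg2 q x \<alpha> = qpoch_inf (qpow q (2*x)) (complex_of_real (q\<^sup>2)) / qpoch_inf (qpow q (2*(x+\<alpha>))) (complex_of_real (q\<^sup>2)) * EE q (-\<alpha>)"
proof -
  define K where "K = qpoch_inf (complex_of_real (q\<^sup>2)) (complex_of_real (q\<^sup>2))"
  define Q0 where "Q0 = qpoch_inf (qpow q (2*x)) (complex_of_real (q\<^sup>2))"
  define Q1 where "Q1 = qpoch_inf (qpow q (2*(x+\<alpha>))) (complex_of_real (q\<^sup>2))"
  have e: "exp ((1 - (x+\<alpha>)) * complex_of_real (ln (1 - q\<^sup>2))) = EE q (-\<alpha>) * exp ((1 - x) * complex_of_real (ln (1 - q\<^sup>2)))"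
  proof -
    have "(1 - (x+\<alpha>)) * complex_of_real (ln (1 - q\<^sup>2)) = -\<alpha> * complex_of_real (ln (1 - q\<^sup>2)) + (1 - x) * complex_of_real (ln (1 - q\<^sup>2))"
      by (simp add: algebra_simps)
    then show ?thesis unfolding EE_def by (simp only: exp_add)
  qed
  have "qpochg2 q x \<alpha> = (K / Q1 * (EE q (-\<alpha>) * exp ((1 - x) * complex_of_real (ln (1 - q\<^sup>2))))) / (K / Q0 * exp ((1 - x) * complex_of_real (ln (1 - q\<^sup>2))))"
    unfolding qpochg2_def qgamma2_def K_def Q0_def Q1_def e ..
  also have "\<dots> = Q0 / Q1 * EE q (-\<alpha>)"
    using assms unfolding K_def[symmetric] by (rule abs_qpg) simp
  finally show ?thesis unfolding Q0_def Q1_def .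
qed

lemma qfact2_eq: assumes "0 < q" "q < 1"
  shows "qfact2 q n = pc (complex_of_real (q^2)) (complex_of_real (q^2)) n / complex_of_real (1 - q^2) ^ n"
proof (induction n)
  case 0 then show ?case by (simp add: qfact2_def)
next
  case (Suc n)
  have "qfact2 q (Suc n) = qfact2 q n * qint2 q (of_nat (Suc n))"
    unfolding qfact2_def by (simp add: prod.nat_ivl_Suc')
  also have "qint2 q (of_nat (Suc n)) = (1 - complex_of_real (q^2) * complex_of_real (q^2) ^ n) / complex_of_real (1 - q^2)"
    unfolding qint2_def using qpow_nat[OF assms(1), of "Suc n"] by simp
  finally have "qfact2 q (Suc n) = qfact2 q n * ((1 - complex_of_real (q^2) * complex_of_real (q^2) ^ n) / complex_of_real (1 - q^2))" .
  moreover have "complex_of_real (1 - q^2) \<noteq> 0" using assms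
    by (metis diff_gt_0_iff_gt less_numeral_extra(4) of_real_eq_0_iff one_power2 power_strict_mono zero_le_numeral zero_less_numeral not_less_iff_gr_or_eq less_le_not_le order.strict_implies_not_eq)
  ultimately show ?case using Suc.IH by (simp add: pc_Suc divide_simps mult.commute)
qed


lemma qpow_mult_nat: "qpow q (x * of_nat n) = qpow q x ^ n"
  unfolding qpow_def by (metis exp_of_nat_mult mult.assoc mult.commute)

lemma qpow_nz: "qpow q x \<noteq> 0" by (simp add: qpow_def)

lemma qi_shift:
  assumes "norm P < 1" "qpoch_inf c P \<noteq> 0"
  shows "qpoch_inf (c * P^n) P = qpoch_inf c P / pc P c n"
proof -
  have "\<forall>j. c*P^j \<noteq> 1" using qpoch_nonzero_iff[OF assms(1)] assms(2) by blast
  then have pz: "pc P c n \<noteq> 0" using pc_nonzero by blast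
  show ?thesis using qpoch_split[OF assms(1), of c n] pz by (simp add: field_simps)
qed

lemma Pm_inv: assumes "C * s = 1" shows "Pm P s n = s^n * pc P C n"
proof -
  have "s - P^j = s * (1 - C * P^j)" for j using assms by (simp add: algebra_simps)
  then show ?thesis unfolding Pm_def pc_def by (simp add: prod.distrib)
qed

lemma abs_T:
  fixes AX A QP QA pA QH QB pB QC pC QD pD W pP Wn Qz pz Qs ps Qt pt E1 E2 E3 E4 E5 E6 E7 Zn sn tn :: complex
  assumes "QA \<noteq> 0" "QB \<noteq> 0" "QC \<noteq> 0" "QD \<noteq> 0" "QH \<noteq> 0" "Qz \<noteq> 0" "Qs \<noteq> 0" "Qt \<noteq> 0"
    "pA \<noteq> 0" "pB \<noteq> 0" "pC \<noteq> 0" "pD \<noteq> 0" "pP \<noteq> 0" "pz \<noteq> 0" "ps \<noteq> 0" "pt \<noteq> 0"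
    "E1 \<noteq> 0" "E2 \<noteq> 0" "E3 \<noteq> 0" "E4 \<noteq> 0" "E5 \<noteq> 0" "E6 \<noteq> 0" "E7 \<noteq> 0" "W \<noteq> 0" "Wn \<noteq> 0" "1 - A \<noteq> 0"
  shows "(1 - AX) * (QP / (QA / pA) * E1) * (QH / (QB / pB) * E2) * (QH / (QC / pC) * E3) * (QH / (QD / pD) * E4)
     / (W * (pP / Wn) * (QH / (Qz / pz) * E5) * (QH / (Qs / ps) * E6) * (QH / (Qt / pt) * E7)) * (Zn * sn * tn)
   = (1-A)*QP*Qz*Qs*Qt/(QA*QB*QC*QD*W) * (E1*E2*E3*E4/(E5*E6*E7)*Wn)
     * ((1 - AX)/(1-A) * pA * pB / (pP * pz) * Zn * (sn * pC) / ps * (tn * pD) / pt)"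
  using assms by (simp add: field_simps)

lemma abs_R:
  fixes A QP QAP QB QC QD QH Qz Qs Qt Qzst Qzs Qzt Qst W qq qq2 EEs Eb Ec Ed Eg Eh1 Eh2 Eh3 :: complex
  assumes "1 - A \<noteq> 0" "QAP \<noteq> 0" "QB \<noteq> 0" "QC \<noteq> 0" "QD \<noteq> 0" "QH \<noteq> 0" "Qz \<noteq> 0" "Qs \<noteq> 0" "Qt \<noteq> 0"
    "Qzst \<noteq> 0" "Qzs \<noteq> 0" "Qzt \<noteq> 0" "Qst \<noteq> 0" "W \<noteq> 0" "Eh1 \<noteq> 0" "Eh2 \<noteq> 0" "Eh3 \<noteq> 0" "qq \<noteq> 0" "QP \<noteq> 0"
    and qq: "qq2 = qq*qq" and E: "EEs = W*W*W*Eb*Ec*Ed*Eg/Eh1/Eh2/Eh3"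
  shows "(1-A)*QP*Qz*Qs*Qt/(((1-A)*QAP)*QB*QC*QD*W) * EEs * (QAP*Qzs*Qzt*Qst/(Qz*Qs*Qt*Qzst))
    = (W*qq*QP^2/QH^2)^2 * (QH/QB*Eb) * (QH/QC*Ec) * (QH/QD*Ed) * (QH/Qzst*Eg)
      / ((QP/Qzs*Eh1) * (QP/Qzt*Eh2) * (QP/Qst*Eh3) * qq2)"
  unfolding qq E using assms(1-19) by (simp add: field_simps power2_eq_square)

theorem theorem4p1:
  fixes q :: real and a b c d :: complex
  assumes q0: "0 < q" and q1: "q < 1"
    and re: "Re (a + b + c + d - 1/2) > 0"
    and lhs_def: "\<forall>n::nat.
        qgamma2_defined q 1 \<and> qgamma2_defined q (a + of_nat n) \<and>
        qgamma2_defined q (1/2) \<and>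
        qgamma2_defined q (1/2 + of_nat n - b) \<and>
        qgamma2_defined q (1/2 + of_nat n - c) \<and>
        qgamma2_defined q (1/2 + of_nat n - d) \<and>
        qgamma2_defined q (1/2 + a + b + of_nat n) \<and>
        qgamma2_defined q (1/2 + a + c + of_nat n) \<and>
        qgamma2_defined q (1/2 + a + d + of_nat n)"
    and rhs_def:
        "qgamma2_defined q (1/2 - b)" "qgamma2_defined q (1/2 - c)"
        "qgamma2_defined q (1/2 - d)" "qgamma2_defined q (a + b + c + d - 1/2)"
        "qgamma2_defined q (a + b + c)" "qgamma2_defined q (a + b + d)"
        "qgamma2_defined q (a + c + d)"
  shows "(\<lambda>n::nat.
      (1 - qpow q (4 * of_nat n + 2 * a)) * qpochg2 q 1 (a + of_nat n - 1)
        * qpochg2 q (1/2) (of_nat n - b) * qpochg2 q (1/2) (of_nat n - c)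
        * qpochg2 q (1/2) (of_nat n - d)
      / (complex_of_real (1 - q\<^sup>2) * qfact2 q n
        * qpochg2 q (1/2) (a + b + of_nat n) * qpochg2 q (1/2) (a + c + of_nat n)
        * qpochg2 q (1/2) (a + d + of_nat n))
      * qpow q (2 * (a + b + c + d) * of_nat n - of_nat n))
    sums
      ((pi_q q)\<^sup>2 * qpochg2 q (1/2) (- b) * qpochg2 q (1/2) (- c)
        * qpochg2 q (1/2) (- d) * qpochg2 q (1/2) (a + b + c + d - 1)
      / (qpochg2 q 1 (a + b + c - 1) * qpochg2 q 1 (a + b + d - 1)
        * qpochg2 q 1 (a + c + d - 1) * qpow q (1/2)))"
  proof -
  define P where "P = complex_of_real (q^2)"
  define e where "e x = qpow q (2*x)" for x
  define W where "W = complex_of_real (1 - q^2)"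
  have q2: "0 < q^2" "q^2 < 1" using q0 q1 by (simp_all add: power_less_one_iff)
  have nP: "norm P < 1" using q2 unfolding P_def norm_of_real by simp
  have e_add: "e (x+y) = e x * e y" for x y unfolding e_def by (simp add: distrib_left qpow_add)
  have e_nat: "e (of_nat n) = P^n" for n unfolding e_def P_def by (rule qpow_nat[OF q0])
  have e1: "e 1 = P" using e_nat[of 1] by simp
  have eh: "e (1/2) = complex_of_real q" unfolding e_def using qpow_one[OF q0] by simp
  have e_nz: "e x \<noteq> 0" for x unfolding e_def by (rule qpow_nz)
  have e_norm: "norm (e x) = exp (2 * Re x * ln q)" for x
    unfolding e_def qpow_def by (simp add: norm_exp_eq_Re mult_ac)
  have def_iff: "qgamma2_defined q x \<longleftrightarrow> qpoch_inf (e x) P \<noteq> 0" for x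
    unfolding qgamma2_defined_def e_def P_def ..
  define A where "A = e a"
  define B where "B = e (1/2 - b)"
  define C where "C = e (1/2 - c)"
  define D where "D = e (1/2 - d)"
  define s where "s = e (c - 1/2)"
  define t where "t = e (d - 1/2)"
  have B0: "B \<noteq> 0" by (simp add: B_def e_nz)
  have i1: "e (1/2+a+b) = A*P/B"
  proof -
    have "e (1/2+a+b) * B = e ((1/2+a+b) + (1/2-b))" by (simp only: B_def e_add)
    also have "(1/2+a+b) + (1/2-b) = a + 1" by simp
    also have "e (a + 1) = A * P" by (simp only: e_add e1 A_def)
    finally show ?thesis using B0 by (simp add: field_simps)
  qed
  have i2: "e (1/2+a+c) = A*P* s"
  proof -
    have "e (1/2+a+c) = e ((a + 1) + (c - 1/2))" by (rule arg_cong[where f=e]) simp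
    also have "\<dots> = e (a + 1) * e (c - 1/2)" by (rule e_add)
    finally show ?thesis by (simp only: e_add e1 A_def s_def)
  qed
  have i3: "e (1/2+a+d) = A*P*t"
  proof -
    have "e (1/2+a+d) = e ((a + 1) + (d - 1/2))" by (rule arg_cong[where f=e]) simp
    also have "\<dots> = e (a + 1) * e (d - 1/2)" by (rule e_add)
    finally show ?thesis by (simp only: e_add e1 A_def t_def)
  qed
  have i4: "e (a+b+c) = A*P/B* s"
  proof -
    have "e (a+b+c) = e (((1/2+a+b)) + (c - 1/2))" by (rule arg_cong[where f=e]) simp
    also have "\<dots> = e ((1/2+a+b)) * e (c - 1/2)" by (rule e_add)
    finally show ?thesis by (simp only: i1 s_def)
  qed
  have i5: "e (a+b+d) = A*P/B*t"
  proof -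
    have "e (a+b+d) = e (((1/2+a+b)) + (d - 1/2))" by (rule arg_cong[where f=e]) simp
    also have "\<dots> = e ((1/2+a+b)) * e (d - 1/2)" by (rule e_add)
    finally show ?thesis by (simp only: i1 t_def)
  qed
  have i6: "e (a+c+d) = A*P* s*t"
  proof -
    have "e (a+c+d) = e (((1/2+a+c)) + (d - 1/2))" by (rule arg_cong[where f=e]) simp
    also have "\<dots> = e ((1/2+a+c)) * e (d - 1/2)" by (rule e_add)
    finally show ?thesis by (simp only: i2 t_def)
  qed
  have i7: "e (a+b+c+d-1/2) = A*P/B* s*t"
  proof -
    have "e (a+b+c+d-1/2) = e (((a+b+c)) + (d - 1/2))" by (rule arg_cong[where f=e]) simp
    also have "\<dots> = e ((a+b+c)) * e (d - 1/2)" by (rule e_add)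
    finally show ?thesis by (simp only: i4 t_def)
  qed
  have i8: "C * s = 1" "D * t = 1"
  proof -
    have "C * s = e ((1/2 - c) + (c - 1/2))" by (simp only: e_add C_def s_def)
    then show "C * s = 1" using e_nat[of 0] by simp
    have "D * t = e ((1/2 - d) + (d - 1/2))" by (simp only: e_add D_def t_def)
    then show "D * t = 1" using e_nat[of 0] by simp
  qed
  have L0: "qgamma2_defined q 1" "qgamma2_defined q a" "qgamma2_defined q (1/2)"
     "qgamma2_defined q (1/2 + a + b)" "qgamma2_defined q (1/2 + a + c)" "qgamma2_defined q (1/2 + a + d)"
    using lhs_def[rule_format, of 0] by simp_all
  have QP: "qpoch_inf P P \<noteq> 0" using L0(1) e1 by (simp add: def_iff)
  have QA: "qpoch_inf A P \<noteq> 0" using L0(2) by (simp add: def_iff A_def)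
  have QH: "qpoch_inf (complex_of_real q) P \<noteq> 0" using L0(3) eh by (simp add: def_iff)
  have Qz: "qpoch_inf (A*P/B) P \<noteq> 0" using L0(4) i1 by (simp add: def_iff)
  have Qs: "qpoch_inf (A*P* s) P \<noteq> 0" using L0(5) i2 by (simp add: def_iff)
  have Qt: "qpoch_inf (A*P*t) P \<noteq> 0" using L0(6) i3 by (simp add: def_iff)
  have QB: "qpoch_inf B P \<noteq> 0" using rhs_def(1) by (simp add: def_iff B_def)
  have QC: "qpoch_inf C P \<noteq> 0" using rhs_def(2) by (simp add: def_iff C_def)
  have QD: "qpoch_inf D P \<noteq> 0" using rhs_def(3) by (simp add: def_iff D_def)
  have Qzst: "qpoch_inf (A*P/B* s*t) P \<noteq> 0" using rhs_def(4) i7 by (simp add: def_iff)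
  have Qzs: "qpoch_inf (A*P/B* s) P \<noteq> 0" using rhs_def(5) i4 by (simp add: def_iff)
  have Qzt: "qpoch_inf (A*P/B*t) P \<noteq> 0" using rhs_def(6) i5 by (simp add: def_iff)
  have Qst: "qpoch_inf (A*P* s*t) P \<noteq> 0" using rhs_def(7) i6 by (simp add: def_iff)
  have nzf: "\<And>c j. qpoch_inf c P \<noteq> 0 \<Longrightarrow> c * P^j \<noteq> 1" using qpoch_nonzero_iff[OF nP] by blast
  interpret Q: qset "q^2" A B
    by unfold_locales (use q2 B0 nzf[OF QA] nzf[OF Qz] in \<open>simp_all add: P_def\<close>)
  have lt: "norm (A*P/B* s*t) < 1"
  proof -
    have "norm (A*P/B* s*t) = exp (2 * Re (a+b+c+d-1/2) * ln q)" using i7 e_norm by metis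
    also have "\<dots> < 1"
    proof -
      have "ln q < 0" using q0 q1 by simp
      then have "2 * Re (a+b+c+d-1/2) * ln q < 0" using re by (simp add: mult_pos_neg)
      then show ?thesis by simp
    qed
    finally show ?thesis .
  qed
  have rog: "uu P A B s t sums
    (qpoch_inf (A*P) P * qpoch_inf (A*P/B* s) P * qpoch_inf (A*P/B*t) P * qpoch_inf (A*P* s*t) P /
     (qpoch_inf (A*P/B) P * qpoch_inf (A*P* s) P * qpoch_inf (A*P*t) P * qpoch_inf (A*P/B* s*t) P))"
    using Q.rogers[of s t] nzf[OF Qs] nzf[OF Qt] lt unfolding P_def by (simp add: mult_ac)
  have QP': "qpoch_inf (complex_of_real (q\<^sup>2)) (complex_of_real (q\<^sup>2)) \<noteq> 0" using QP by (simp add: P_def)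
  have qpg: "qpochg2 q x \<alpha> = qpoch_inf (e x) P / qpoch_inf (e (x+\<alpha>)) P * EE q (-\<alpha>)" for x \<alpha>
    using qpochg2_eq[OF QP'] unfolding e_def P_def .
  have sh: "qpoch_inf (X * P^n) P = qpoch_inf X P / pc P X n" if "qpoch_inf X P \<noteq> 0" for X n
    by (rule qi_shift[OF nP that])
  have esh: "e (x + of_nat n) = e x * P^n" for x n by (simp only: e_add e_nat)
  have W0: "W \<noteq> 0" unfolding W_def of_real_eq_0_iff using q2 by simp
  have EW: "EE q (of_nat n) = W^n" for n using EE_nat[OF q2(2)] by (simp add: W_def)
  have EW1: "EE q 1 = W" using EE_one[OF q2(2)] by (simp add: W_def)
  define T where "T n = (1 - qpow q (4 * of_nat n + 2 * a)) * qpochg2 q 1 (a + of_nat n - 1)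
        * qpochg2 q (1/2) (of_nat n - b) * qpochg2 q (1/2) (of_nat n - c)
        * qpochg2 q (1/2) (of_nat n - d)
      / (complex_of_real (1 - q\<^sup>2) * qfact2 q n
        * qpochg2 q (1/2) (a + b + of_nat n) * qpochg2 q (1/2) (a + c + of_nat n)
        * qpochg2 q (1/2) (a + d + of_nat n))
      * qpow q (2 * (a + b + c + d) * of_nat n - of_nat n)" for n
  define K0 where "K0 = (1-A)*qpoch_inf P P*qpoch_inf (A*P/B) P*qpoch_inf (A*P* s) P*qpoch_inf (A*P*t) P
      /(qpoch_inf A P*qpoch_inf B P*qpoch_inf C P*qpoch_inf D P*W) * EE q (1+2*a+2*b+2*c+2*d)"
  have Tn: "T n = K0 * uu P A B s t n" for n
  proof -
    have t1: "qpochg2 q 1 (a + of_nat n - 1) = qpoch_inf P P / (qpoch_inf A P / pc P A n) * EE q (-(a + of_nat n - 1))"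
    proof -
      have "e (1 + (a + of_nat n - 1)) = e (a + of_nat n)" by (rule arg_cong[where f=e]) simp
      then have f: "e (1 + (a + of_nat n - 1)) = A * P^n" by (simp only: esh A_def)
      show ?thesis unfolding qpg e1 f sh[OF QA] ..
    qed
    have t2: "qpochg2 q (1/2) (of_nat n - X) = qpoch_inf (complex_of_real q) P / (qpoch_inf (e (1/2 - X)) P / pc P (e (1/2 - X)) n) * EE q (-(of_nat n - X))"
      if "qpoch_inf (e (1/2 - X)) P \<noteq> 0" for X
    proof -
      have "e (1/2 + (of_nat n - X)) = e ((1/2 - X) + of_nat n)" by (rule arg_cong[where f=e]) simp
      then have f: "e (1/2 + (of_nat n - X)) = e (1/2 - X) * P^n" by (simp only: esh)
      show ?thesis unfolding qpg eh f sh[OF that] ..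
    qed
    have t5: "qpochg2 q (1/2) (Y + of_nat n) = qpoch_inf (complex_of_real q) P / (qpoch_inf (e (1/2 + Y)) P / pc P (e (1/2 + Y)) n) * EE q (-(Y + of_nat n))"
      if "qpoch_inf (e (1/2 + Y)) P \<noteq> 0" for Y
    proof -
      have "e (1/2 + (Y + of_nat n)) = e ((1/2 + Y) + of_nat n)" by (rule arg_cong[where f=e]) simp
      then have f: "e (1/2 + (Y + of_nat n)) = e (1/2 + Y) * P^n" by (simp only: esh)
      show ?thesis unfolding qpg eh f sh[OF that] ..
    qed
    have ab: "1/2 + (a+b) = 1/2+a+b" "1/2 + (a+c) = 1/2+a+c" "1/2 + (a+d) = 1/2+a+d" by simp_all
    have t4: "qpow q (4 * of_nat n + 2 * a) = A * P^(2*n)"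
    proof -
      have "qpow q (4 * of_nat n + 2 * a) = e (of_nat (2*n) + a)" unfolding e_def
        by (rule arg_cong[where f="qpow q"]) (simp add: algebra_simps)
      then show ?thesis by (simp only: e_add e_nat A_def mult.commute)
    qed
    have t6: "qpow q (2 * (a + b + c + d) * of_nat n - of_nat n) = (A*P/B* s*t)^n"
    proof -
      have "qpow q (2 * (a + b + c + d) * of_nat n - of_nat n) = qpow q (2 * (a+b+c+d-1/2) * of_nat n)"
        by (rule arg_cong[where f="qpow q"]) (simp add: algebra_simps)
      also have "\<dots> = e (a+b+c+d-1/2) ^ n" unfolding e_def by (rule qpow_mult_nat)
      finally show ?thesis unfolding i7 .
    qed
    have pnz: "pc P X n \<noteq> 0" if "qpoch_inf X P \<noteq> 0" for X using nzf[OF that] pc_nonzero by blast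
    have ee: "EE q x \<noteq> 0" for x by (rule EE_nz)
    have AX: "1 - A \<noteq> 0" using nzf[OF QA, of 0] by auto
    have Wn: "W^n \<noteq> 0" using W0 by simp
    have eT: "T n = (1 - A*P^(2*n)) * (qpoch_inf P P / (qpoch_inf A P / pc P A n) * EE q (-(a + of_nat n - 1)))
       * (qpoch_inf (complex_of_real q) P / (qpoch_inf B P / pc P B n) * EE q (-(of_nat n - b)))
       * (qpoch_inf (complex_of_real q) P / (qpoch_inf C P / pc P C n) * EE q (-(of_nat n - c)))
       * (qpoch_inf (complex_of_real q) P / (qpoch_inf D P / pc P D n) * EE q (-(of_nat n - d)))
       / (W * (pc P P n / W^n)
         * (qpoch_inf (complex_of_real q) P / (qpoch_inf (A*P/B) P / pc P (A*P/B) n) * EE q (-(a + b + of_nat n)))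
         * (qpoch_inf (complex_of_real q) P / (qpoch_inf (A*P* s) P / pc P (A*P* s) n) * EE q (-(a + c + of_nat n)))
         * (qpoch_inf (complex_of_real q) P / (qpoch_inf (A*P*t) P / pc P (A*P*t) n) * EE q (-(a + d + of_nat n))))
       * ((A*P/B)^n * s^n * t^n)"
      unfolding T_def t4 t1 t2[OF QB[unfolded B_def]] t2[OF QC[unfolded C_def]] t2[OF QD[unfolded D_def]]
        t5[OF Qz[folded i1, folded ab(1)]] t5[OF Qs[folded i2, folded ab(2)]] t5[OF Qt[folded i3, folded ab(3)]]
        t6 qfact2_eq[OF q0 q1] B_def[symmetric] C_def[symmetric] D_def[symmetric] ab i1 i2 i3
        P_def[symmetric] W_def[symmetric] power_mult_distrib ..
    have eU: "uu P A B s t n = (1 - A*P^(2*n))/(1-A) * pc P A n * pc P B n / (pc P P n * pc P (A*P/B) n)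
        * (A*P/B)^n * (s^n * pc P C n) / pc P (A*P* s) n * (t^n * pc P D n) / pc P (A*P*t) n"
      unfolding uu_def Pm_inv[OF i8(1)] Pm_inv[OF i8(2)] ..
    have EEid: "EE q (1+2*a+2*b+2*c+2*d) = EE q (-(a + of_nat n - 1)) * EE q (-(of_nat n - b)) * EE q (-(of_nat n - c)) * EE q (-(of_nat n - d))
       / (EE q (-(a + b + of_nat n)) * EE q (-(a + c + of_nat n)) * EE q (-(a + d + of_nat n))) * W^n"
    proof -
      have "EE q (1+2*a+2*b+2*c+2*d) = EE q ((-(a + of_nat n - 1)) + (-(of_nat n - b)) + (-(of_nat n - c)) + (-(of_nat n - d))
         - (-(a + b + of_nat n)) - (-(a + c + of_nat n)) - (-(a + d + of_nat n)) + of_nat n)"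
        by (rule arg_cong[where f="EE q"]) (simp add: algebra_simps)
      also have "\<dots> = EE q (-(a + of_nat n - 1)) * EE q (-(of_nat n - b)) * EE q (-(of_nat n - c)) * EE q (-(of_nat n - d))
         / EE q (-(a + b + of_nat n)) / EE q (-(a + c + of_nat n)) / EE q (-(a + d + of_nat n)) * EE q (of_nat n)"
        by (simp only: EE_add EE_diff)
      finally show ?thesis unfolding EW by (simp add: field_simps ee)
    qed
    show ?thesis unfolding eT eU K0_def EEid
      by (rule abs_T) (use QA QB QC QD QH Qz Qs Qt pnz[OF QA] pnz[OF QB] pnz[OF QC] pnz[OF QD] pnz[OF QP]
        pnz[OF Qz] pnz[OF Qs] pnz[OF Qt] ee W0 Wn AX in auto)
  qed
  have Tsum: "T sums (K0 * (qpoch_inf (A*P) P * qpoch_inf (A*P/B* s) P * qpoch_inf (A*P/B*t) P * qpoch_inf (A*P* s*t) P /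
     (qpoch_inf (A*P/B) P * qpoch_inf (A*P* s) P * qpoch_inf (A*P*t) P * qpoch_inf (A*P/B* s*t) P)))"
  proof -
    have "T = (\<lambda>n. K0 * uu P A B s t n)" using Tn by (rule ext)
    then show ?thesis using sums_mult[OF rog, of K0] by simp
  qed
  have g1: "qpochg2 q (1/2) (- X) = qpoch_inf (complex_of_real q) P / qpoch_inf (e (1/2 - X)) P * EE q (-(-X))" for X
  proof -
    have "e (1/2 + - X) = e (1/2 - X)" by (rule arg_cong[where f=e]) simp
    then show ?thesis unfolding qpg eh by simp
  qed
  have g4: "qpochg2 q (1/2) (a+b+c+d-1) = qpoch_inf (complex_of_real q) P / qpoch_inf (A*P/B* s*t) P * EE q (-(a+b+c+d-1))"
  proof -
    have "e (1/2 + (a+b+c+d-1)) = e (a+b+c+d-1/2)" by (rule arg_cong[where f=e]) simp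
    then have f: "e (1/2 + (a+b+c+d-1)) = A*P/B* s*t" unfolding i7 .
    show ?thesis unfolding qpg eh f ..
  qed
  have h: "qpochg2 q 1 (Y - 1) = qpoch_inf P P / qpoch_inf (e Y) P * EE q (-(Y-1))" for Y
  proof -
    have f: "e (1 + (Y - 1)) = e Y" by (rule arg_cong[where f=e]) simp
    show ?thesis unfolding qpg e1 f ..
  qed
  have pq: "pi_q q = W * qpow q (1/4) * (qpoch_inf P P)^2 / (qpoch_inf (complex_of_real q) P)^2"
    unfolding pi_q_def P_def W_def ..
  have qq: "qpow q (1/2) = qpow q (1/4) * qpow q (1/4)"
  proof -
    have "qpow q (1/2) = qpow q (1/4 + 1/4)" by (rule arg_cong[where f="qpow q"]) simp
    then show ?thesis by (simp only: qpow_add)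
  qed
  have QAs: "qpoch_inf A P = (1 - A) * qpoch_inf (A*P) P"
    using qpoch_split[OF nP, of A 1] by (simp add: pc_def)
  have QAP: "qpoch_inf (A*P) P \<noteq> 0" using QA QAs by auto
  have AX: "1 - A \<noteq> 0" using nzf[OF QA, of 0] by auto
  have EEid2: "EE q (1+2*a+2*b+2*c+2*d) = W*W*W*EE q (-(-b))*EE q (-(-c))*EE q (-(-d))*EE q (-(a+b+c+d-1))
      / EE q (-(a+b+c-1)) / EE q (-(a+b+d-1)) / EE q (-(a+c+d-1))"
  proof -
    have "EE q (1+2*a+2*b+2*c+2*d) = EE q (1+1+1+(-(-b))+(-(-c))+(-(-d))+(-(a+b+c+d-1))
      - (-(a+b+c-1)) - (-(a+b+d-1)) - (-(a+c+d-1)))"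
      by (rule arg_cong[where f="EE q"]) (simp add: algebra_simps)
    also have "\<dots> = EE q 1 * EE q 1 * EE q 1 *EE q (-(-b))*EE q (-(-c))*EE q (-(-d))*EE q (-(a+b+c+d-1))
      / EE q (-(a+b+c-1)) / EE q (-(a+b+d-1)) / EE q (-(a+c+d-1))"
      by (simp only: EE_add EE_diff)
    finally show ?thesis unfolding EW1 .
  qed
  have RHS: "K0 * (qpoch_inf (A*P) P * qpoch_inf (A*P/B* s) P * qpoch_inf (A*P/B*t) P * qpoch_inf (A*P* s*t) P /
     (qpoch_inf (A*P/B) P * qpoch_inf (A*P* s) P * qpoch_inf (A*P*t) P * qpoch_inf (A*P/B* s*t) P))
    = ((pi_q q)\<^sup>2 * qpochg2 q (1/2) (- b) * qpochg2 q (1/2) (- c)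
        * qpochg2 q (1/2) (- d) * qpochg2 q (1/2) (a + b + c + d - 1)
      / (qpochg2 q 1 (a + b + c - 1) * qpochg2 q 1 (a + b + d - 1)
        * qpochg2 q 1 (a + c + d - 1) * qpow q (1/2)))"
    unfolding K0_def QAs g1 g4 h pq B_def[symmetric] C_def[symmetric] D_def[symmetric] i4 i5 i6
    by (rule abs_R[OF AX QAP QB QC QD QH Qz Qs Qt Qzst Qzs Qzt Qst W0 EE_nz EE_nz EE_nz qpow_nz QP qq EEid2])
  show ?thesis using Tsum unfolding RHS T_def .
qed

end
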